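(* Let $G$ be a unimodular locally compact group with Haar measure $m$, and let $\nu$ be a Delone measure on $G$. Let $B_l,B_u\subseteq G$ be compact symmetric unit neighborhoods and $C_l,C_u$ positive finite constants with $C_l\le \nu(B_lx)$ and $\nu(B_u^2x)\le C_u$ for all $x\in G$. Then \[ \frac{C_l}{m(B_l^{2})}\cdot I(G)\le \mathrm{L}_\nu^-\le \frac{C_u}{m(B_u)}\cdot I(G), \qquad \frac{C_l}{m(B_l^{2})}\cdot I(G)^{-1} \le \mathrm{L}_\nu^+\le \frac{C_u}{m(B_u)} \cdot I(G)^{-1}. \]
   Context: A measure is a positive Borel measure. $\nu$ is upper translation bounded if $\sup_{x\in G}\nu(B_ux)<\infty$ for some compact symmetric unit neighborhood $B_u$, lower translation bounded if $\inf_{x\in G}\nu(B_lx)>0$ for some compact symmetric unit neighborhood $B_l$, and a Delone measure if both. $\mathcal K$: nonempty compact subsets of $G$; $\mathcal K_p$: those of positive Haar measure. $I(G)=\sup_{K\in \mathcal K}\inf_{A\in \mathcal K_p} m(KA)/m(A)\in[1,\infty]$, with $1/\infty=0$. $\mathrm{L}_\nu^-=\sup_{K\in \mathcal K}\inf_{A\in \mathcal K_p} \nu(KA)/m(A)$, $\mathrm{L}_\nu^+=\inf_{K\in \mathcal K}\sup_{A\in \mathcal K_p} \nu(A)/m(KA)$. $B^2=BB$. *)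

theory Defs
  imports "HOL-Analysis.Analysis"
begin

text \<open>The (possibly non-abelian) group G is written additively via the type class
  topological_group_add (group_add is not required to be commutative).
  Products AB become setprod A B, right translates Bx become rtrans B x.\<close>

definition setprod :: "'g::group_add set \<Rightarrow> 'g set \<Rightarrow> 'g set" where
  "setprod A B = {a + b | a b. a \<in> A \<and> b \<in> B}"

definition rtrans :: "'g::group_add set \<Rightarrow> 'g \<Rightarrow> 'g set" where
  "rtrans B x = (\<lambda>b. b + x) ` B"

definition ltrans :: "'g::group_add \<Rightarrow> 'g set \<Rightarrow> 'g set" where
  "ltrans x B = (\<lambda>b. x + b) ` B"

definition csu_nbhd :: "'g::topological_group_add set \<Rightarrow> bool" where
  "csu_nbhd B \<longleftrightarrow> compact B \<and> uminus ` B = B \<and> 0 \<in> interior B"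

definition borel_measure_on :: "'g::topological_space measure \<Rightarrow> bool" where
  "borel_measure_on \<mu> \<longleftrightarrow> sets \<mu> = sets borel"

definition radon_measure :: "'g::topological_space measure \<Rightarrow> bool" where
  "radon_measure \<mu> \<longleftrightarrow> borel_measure_on \<mu> \<and>
     (\<forall>K. compact K \<longrightarrow> emeasure \<mu> K < \<infinity>) \<and>
     (\<forall>A \<in> sets borel. emeasure \<mu> A = (INF U \<in> {U. open U \<and> A \<subseteq> U}. emeasure \<mu> U)) \<and>
     (\<forall>U. open U \<longrightarrow> emeasure \<mu> U = (SUP K \<in> {K. compact K \<and> K \<subseteq> U}. emeasure \<mu> K))"

definition haar_measure :: "'g::topological_group_add measure \<Rightarrow> bool" where
  "haar_measure m \<longleftrightarrow> radon_measure m \<and>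
     (\<forall>x. \<forall>A \<in> sets borel. emeasure m (ltrans x A) = emeasure m A) \<and>
     (\<exists>A \<in> sets borel. emeasure m A \<noteq> 0)"

definition unimodular_haar :: "'g::topological_group_add measure \<Rightarrow> bool" where
  "unimodular_haar m \<longleftrightarrow> haar_measure m \<and>
     (\<forall>x. \<forall>A \<in> sets borel. emeasure m (rtrans A x) = emeasure m A)"

definition upper_translation_bounded :: "'g::topological_group_add measure \<Rightarrow> bool" where
  "upper_translation_bounded \<nu> \<longleftrightarrow>
     (\<exists>B. csu_nbhd B \<and> (SUP x. emeasure \<nu> (rtrans B x)) < \<infinity>)"

definition lower_translation_bounded :: "'g::topological_group_add measure \<Rightarrow> bool" where
  "lower_translation_bounded \<nu> \<longleftrightarrow>
     (\<exists>B. csu_nbhd B \<and> (INF x. emeasure \<nu> (rtrans B x)) > 0)"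

definition delone_measure :: "'g::topological_group_add measure \<Rightarrow> bool" where
  "delone_measure \<nu> \<longleftrightarrow> borel_measure_on \<nu> \<and>
     upper_translation_bounded \<nu> \<and> lower_translation_bounded \<nu>"

definition cpt_sets :: "'g::topological_space set set" where
  "cpt_sets = {K. compact K \<and> K \<noteq> {}}"

definition cpt_pos_sets :: "'g::topological_space measure \<Rightarrow> 'g set set" where
  "cpt_pos_sets m = {A. compact A \<and> A \<noteq> {} \<and> emeasure m A > 0}"

text \<open>ennreal arithmetic: x / 0 = \<infinity> for x > 0, 1 / \<infinity> = 0\<close>
definition I_G :: "'g::topological_group_add measure \<Rightarrow> ennreal" where
  "I_G m = (SUP K \<in> cpt_sets. INF A \<in> cpt_pos_sets m. emeasure m (setprod K A) / emeasure m A)"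

definition L_minus :: "'g::topological_group_add measure \<Rightarrow> 'g measure \<Rightarrow> ennreal" where
  "L_minus m \<nu> = (SUP K \<in> cpt_sets. INF A \<in> cpt_pos_sets m. emeasure \<nu> (setprod K A) / emeasure m A)"

definition L_plus :: "'g::topological_group_add measure \<Rightarrow> 'g measure \<Rightarrow> ennreal" where
  "L_plus m \<nu> = (INF K \<in> cpt_sets. SUP A \<in> cpt_pos_sets m. emeasure \<nu> A / emeasure m (setprod K A))"

end

theory Submission
  imports Defs
begin

lemma setprod_image: "setprod A B = (\<lambda>p. fst p + snd p) ` (A \<times> B)"
  unfolding setprod_def by force

lemma compact_setprod:
  fixes A B :: "'g::topological_group_add set"
  assumes "compact A" "compact B" shows "compact (setprod A B)"
  unfolding setprod_image
  by (intro compact_continuous_image compact_Times assms continuous_intros)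

lemma compact_rtrans:
  fixes A :: "'g::topological_group_add set"
  assumes "compact A" shows "compact (rtrans A x)"
  unfolding rtrans_def
  by (intro compact_continuous_image assms continuous_intros)

lemma open_ltrans:
  fixes U :: "'g::topological_group_add set"
  assumes "open U" shows "open (ltrans x U)"
proof -
  have "ltrans x U = (\<lambda>y. -x + y) -` U"
    unfolding ltrans_def by (auto simp: image_iff) (metis add_minus_cancel)
  moreover have "continuous_on UNIV (\<lambda>y. -x + y)" by (intro continuous_intros)
  ultimately show ?thesis using assms by (simp add: open_vimage)
qed

lemma compact_borel: "compact (A::'g::t2_space set) \<Longrightarrow> A \<in> sets borel"
  by (simp add: compact_imp_closed borel_closed)

lemma setprod_assoc: "setprod (setprod A B) C = setprod A (setprod B (C::'g::group_add set))"
  unfolding setprod_def by (auto simp: add.assoc) (metis add.assoc)+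

lemma rtrans_setprod: "rtrans (setprod A B) x = setprod A (rtrans B (x::'g::group_add))"
  unfolding setprod_def rtrans_def by (force simp: add.assoc)

lemma setprod_sub1: "(0::'g::group_add) \<in> B \<Longrightarrow> A \<subseteq> setprod B A"
  unfolding setprod_def by force

lemma setprod_sub2: "(0::'g::group_add) \<in> B \<Longrightarrow> A \<subseteq> setprod A B"
  unfolding setprod_def by force

lemma setprod_ne: "A \<noteq> {} \<Longrightarrow> B \<noteq> {} \<Longrightarrow> setprod A B \<noteq> {}"
  unfolding setprod_def by auto

lemma csu_zero: "csu_nbhd B \<Longrightarrow> 0 \<in> B"
  unfolding csu_nbhd_def using interior_subset by blast

lemma haar_radon: "unimodular_haar m \<Longrightarrow> radon_measure m"
  unfolding unimodular_haar_def haar_measure_def by (elim conjE)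

lemma haar_sets: "unimodular_haar m \<Longrightarrow> sets m = sets borel"
proof -
  assume "unimodular_haar m"
  hence "radon_measure m" by (rule haar_radon)
  thus ?thesis unfolding radon_measure_def borel_measure_on_def by (elim conjE)
qed

lemma haar_fin: "unimodular_haar m \<Longrightarrow> compact K \<Longrightarrow> emeasure m K < \<infinity>"
proof -
  assume h: "unimodular_haar m" and "compact K"
  from h have "radon_measure m" by (rule haar_radon)
  hence "\<forall>K. compact K \<longrightarrow> emeasure m K < \<infinity>" unfolding radon_measure_def by (elim conjE)
  thus ?thesis using \<open>compact K\<close> by simp
qed

lemma haar_rinv: "unimodular_haar m \<Longrightarrow> A \<in> sets borel \<Longrightarrow> emeasure m (rtrans A x) = emeasure m A"
proof -
  assume "unimodular_haar m" "A \<in> sets borel"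
  hence "\<forall>x. \<forall>A \<in> sets borel. emeasure m (rtrans A x) = emeasure m A" unfolding unimodular_haar_def by (elim conjE)
  thus ?thesis using \<open>A \<in> sets borel\<close> by simp
qed

lemma haar_linv: "unimodular_haar m \<Longrightarrow> A \<in> sets borel \<Longrightarrow> emeasure m (ltrans x A) = emeasure m A"
proof -
  assume "unimodular_haar m" "A \<in> sets borel"
  hence "\<forall>x. \<forall>A \<in> sets borel. emeasure m (ltrans x A) = emeasure m A" unfolding unimodular_haar_def haar_measure_def by (elim conjE)
  thus ?thesis using \<open>A \<in> sets borel\<close> by simp
qed


lemma haar_inner: "unimodular_haar m \<Longrightarrow> open U \<Longrightarrow> emeasure m U = (SUP K \<in> {K. compact K \<and> K \<subseteq> U}. emeasure m K)"
proof -
  assume h: "unimodular_haar m" and o: "open U"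
  from h have "radon_measure m" by (rule haar_radon)
  hence "\<forall>U. open U \<longrightarrow> emeasure m U = (SUP K \<in> {K. compact K \<and> K \<subseteq> U}. emeasure m K)"
    unfolding radon_measure_def by (elim conjE)
  hence "open U \<longrightarrow> emeasure m U = (SUP K \<in> {K. compact K \<and> K \<subseteq> U}. emeasure m K)" by (rule spec)
  thus ?thesis using o by (rule mp)
qed

lemma haar_outer: "unimodular_haar m \<Longrightarrow> A \<in> sets borel \<Longrightarrow> emeasure m A = (INF U \<in> {U. open U \<and> A \<subseteq> U}. emeasure m U)"
proof -
  assume h: "unimodular_haar m" and o: "A \<in> sets borel"
  from h have "radon_measure m" by (rule haar_radon)
  hence "\<forall>A \<in> sets borel. emeasure m A = (INF U \<in> {U. open U \<and> A \<subseteq> U}. emeasure m U)"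
    unfolding radon_measure_def by (elim conjE)
  thus ?thesis using o by (rule bspec)
qed

lemma haar_nonzero: "unimodular_haar m \<Longrightarrow> \<exists>A \<in> sets borel. emeasure m A \<noteq> 0"
  unfolding unimodular_haar_def haar_measure_def by (elim conjE)

lemma haar_pos:
  fixes m :: "'g::{topological_group_add,t2_space} measure"
  assumes h: "unimodular_haar m" and B: "csu_nbhd B"
  shows "emeasure m B > 0"
proof (rule ccontr)
  assume "\<not> emeasure m B > 0"
  hence B0: "emeasure m B = 0" by simp
  define U where "U = interior B"
  have Uo: "open U" and U0: "0 \<in> U" and UB: "U \<subseteq> B"
    using B unfolding U_def csu_nbhd_def by (auto simp: interior_subset)
  have sm: "sets m = sets borel" using haar_sets[OF h] .
  have Bb: "B \<in> sets borel" using B compact_borel[of B] unfolding csu_nbhd_def by simp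
  have mU: "emeasure m U = 0"
    using emeasure_mono[OF UB, of m] Bb B0 sm by simp
  have mtU: "emeasure m (ltrans x U) = 0" for x
    using haar_linv[OF h] Uo mU by simp
  have cpt0: "emeasure m K = 0" if K: "compact K" for K
  proof -
    have "K \<subseteq> (\<Union>x\<in>K. ltrans x U)"
      unfolding ltrans_def using U0 by force
    then obtain C where C: "C \<subseteq> K" "finite C" "K \<subseteq> (\<Union>x\<in>C. ltrans x U)"
      using compactE_image[OF K, of K "\<lambda>x. ltrans x U"] open_ltrans[OF Uo] by metis
    have "emeasure m K \<le> emeasure m (\<Union>x\<in>C. ltrans x U)"
      by (rule emeasure_mono[OF C(3)]) (use C(2) open_ltrans[OF Uo] sm in auto)
    also have "\<dots> \<le> (\<Sum>x\<in>C. emeasure m (ltrans x U))"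
      by (rule emeasure_subadditive_finite) (use C(2) open_ltrans[OF Uo] sm in auto)
    also have "\<dots> = 0" using mtU by simp
    finally show ?thesis by simp
  qed
  have op0: "emeasure m V = 0" if "open V" for V
  proof -
    have "emeasure m V = (SUP K \<in> {K. compact K \<and> K \<subseteq> V}. emeasure m K)"
      by (rule haar_inner[OF h that])
    also have "\<dots> \<le> 0" by (rule SUP_least) (simp add: cpt0)
    finally show ?thesis by simp
  qed
  obtain A where A: "A \<in> sets borel" "emeasure m A \<noteq> 0"
    using haar_nonzero[OF h] by blast
  have "emeasure m A = (INF U \<in> {U. open U \<and> A \<subseteq> U}. emeasure m U)"
    by (rule haar_outer[OF h A(1)])
  also have "\<dots> = 0"
  proof -
    have "{U. open U \<and> A \<subseteq> U} \<noteq> {}" by blast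
    thus ?thesis using op0 by simp
  qed
  finally show False using A(2) by simp
qed

lemma haar_fin_real: "unimodular_haar m \<Longrightarrow> compact K \<Longrightarrow> emeasure m K = ennreal (measure m K)"
  by (rule emeasure_eq_ennreal_measure) (use haar_fin[of m K] in auto)

lemma haar_pos_real:
  fixes m :: "'g::{topological_group_add,t2_space} measure"
  shows "unimodular_haar m \<Longrightarrow> csu_nbhd B \<Longrightarrow> measure m B > 0"
proof -
  assume h: "unimodular_haar m" and B: "csu_nbhd B"
  have "compact B" using B unfolding csu_nbhd_def by blast
  hence "emeasure m B = ennreal (measure m B)" using haar_fin_real[OF h] by blast
  moreover have "emeasure m B > 0" using haar_pos[OF h B] .
  ultimately show ?thesis by simp
qed

lemma packing:
  fixes m :: "'g::{topological_group_add,t2_space} measure"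
  assumes h: "unimodular_haar m" and B: "csu_nbhd B" and S: "compact S"
  obtains F where "finite F" "F \<subseteq> S" "disjoint_family_on (rtrans B) F"
    "S \<subseteq> (\<Union>x\<in>F. rtrans (setprod B B) x)"
    "real (card F) * measure m B \<le> measure m (setprod B S)"
proof -
  define P where "P F \<longleftrightarrow> finite F \<and> F \<subseteq> S \<and> disjoint_family_on (rtrans B) F" for F
  have sm: "sets m = sets borel" using haar_sets[OF h] .
  have Bc: "compact B" using B unfolding csu_nbhd_def by blast
  have BSc: "compact (setprod B S)" using compact_setprod[OF Bc S] .
  have mBpos: "measure m B > 0" using haar_pos_real[OF h B] .
  have bound: "real (card F) * measure m B \<le> measure m (setprod B S)" if "P F" for F
  proof -
    have fin: "finite F" and FS: "F \<subseteq> S" and dj: "disjoint_family_on (rtrans B) F"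
      using that unfolding P_def by auto
    have rb: "rtrans B x \<in> sets m" for x using compact_borel[OF compact_rtrans[OF Bc]] sm by simp
    have "(\<Sum>x\<in>F. emeasure m (rtrans B x)) = emeasure m (\<Union>x\<in>F. rtrans B x)"
      by (rule sum_emeasure) (use rb dj fin in auto)
    also have "\<dots> \<le> emeasure m (setprod B S)"
    proof (rule emeasure_mono)
      show "(\<Union>x\<in>F. rtrans B x) \<subseteq> setprod B S"
        using FS unfolding rtrans_def setprod_def by blast
      show "setprod B S \<in> sets m" using compact_borel[OF BSc] sm by simp
    qed
    finally have "(\<Sum>x\<in>F. emeasure m (rtrans B x)) \<le> emeasure m (setprod B S)" .
    moreover have "emeasure m (rtrans B x) = emeasure m B" for x
      using haar_rinv[OF h, of B x] compact_borel[OF Bc] by simp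
    ultimately have "of_nat (card F) * emeasure m B \<le> emeasure m (setprod B S)"
      by simp
    hence "of_nat (card F) * ennreal (measure m B) \<le> ennreal (measure m (setprod B S))"
      unfolding haar_fin_real[OF h BSc] haar_fin_real[OF h Bc] .
    hence "ennreal (real (card F) * measure m B) \<le> ennreal (measure m (setprod B S))"
      by (simp add: ennreal_mult'' ennreal_of_nat_eq_real_of_nat)
    thus ?thesis by (simp add: ennreal_le_iff)
  qed
  define N where "N = nat (ceiling (measure m (setprod B S) / measure m B)) + 1"
  have cardb: "card F < N" if "P F" for F
  proof -
    have "real (card F) \<le> measure m (setprod B S) / measure m B"
      using bound[OF that] mBpos by (simp add: field_simps)
    hence "real (card F) \<le> real (nat (ceiling (measure m (setprod B S) / measure m B)))"
      by linarith
    thus ?thesis unfolding N_def by linarith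
  qed
  have P0: "P {}" unfolding P_def by (simp add: disjoint_family_on_def)
  have "\<exists>F. P F \<and> (\<forall>G. P G \<longrightarrow> card G \<le> card F)"
    by (rule ex_has_greatest_nat[of P "{}" card N, OF P0]) (use cardb in blast)
  then obtain F where PF: "P F" and mx: "\<And>G. P G \<Longrightarrow> card G \<le> card F"
    by blast
  have cover: "S \<subseteq> (\<Union>x\<in>F. rtrans (setprod B B) x)"
  proof
    fix y assume yS: "y \<in> S"
    show "y \<in> (\<Union>x\<in>F. rtrans (setprod B B) x)"
    proof (rule ccontr)
      assume ny: "y \<notin> (\<Union>x\<in>F. rtrans (setprod B B) x)"
      have sym: "uminus ` B = B" and B0: "0 \<in> B" using B csu_zero unfolding csu_nbhd_def by auto
      have yF: "y \<notin> F"
      proof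
        assume "y \<in> F"
        moreover have "y \<in> rtrans (setprod B B) y"
          unfolding rtrans_def setprod_def using B0 by force
        ultimately show False using ny by blast
      qed
      have disj: "rtrans B y \<inter> rtrans B x = {}" if xF: "x \<in> F" for x
      proof (rule ccontr)
        assume "rtrans B y \<inter> rtrans B x \<noteq> {}"
        then obtain b1 b2 where b: "b1 \<in> B" "b2 \<in> B" "b1 + y = b2 + x"
          unfolding rtrans_def by auto
        have "-b1 \<in> B" using sym b(1) by blast
        moreover have "y = (-b1 + b2) + x" using b(3)
          by (metis add.assoc minus_add_cancel)
        ultimately have "y \<in> rtrans (setprod B B) x"
          unfolding rtrans_def setprod_def using b(2) by blast
        thus False using ny xF by blast
      qed
      have "rtrans B y \<inter> (\<Union>x\<in>F. rtrans B x) = {}" using disj by blast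
      hence "P (insert y F)"
        using PF yS disjoint_family_on_insert[OF yF, of "rtrans B"] unfolding P_def
        by blast
      hence "card (insert y F) \<le> card F" by (rule mx)
      thus False using yF PF unfolding P_def by simp
    qed
  qed
  have PF': "finite F" "F \<subseteq> S" "disjoint_family_on (rtrans B) F"
    using PF unfolding P_def by auto
  show ?thesis by (rule that[OF PF'(1) PF'(2) PF'(3) cover bound[OF PF]])
qed


lemma haar_mono_real:
  fixes m :: "'g::{topological_group_add,t2_space} measure"
  assumes h: "unimodular_haar m" and "compact A" "compact B" "A \<subseteq> B"
  shows "measure m A \<le> measure m B"
proof -
  have "emeasure m A \<le> emeasure m B"
    by (rule emeasure_mono) (use assms compact_borel haar_sets[OF h] in auto)
  hence "ennreal (measure m A) \<le> ennreal (measure m B)"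
    unfolding haar_fin_real[OF h assms(2)] haar_fin_real[OF h assms(3)] .
  thus ?thesis by (simp add: ennreal_le_iff)
qed

lemma upper_est:
  fixes m \<nu> :: "'g::{topological_group_add,t2_space} measure"
  assumes h: "unimodular_haar m" and B: "csu_nbhd B" and sn: "sets \<nu> = sets borel"
    and C: "0 < C" and bd: "\<And>x. emeasure \<nu> (rtrans (setprod B B) x) \<le> ennreal C"
    and S: "compact S"
  shows "emeasure \<nu> S \<le> ennreal (C / measure m B * measure m (setprod B S))"
proof -
  obtain F where F: "finite F" "F \<subseteq> S" "disjoint_family_on (rtrans B) F"
    "S \<subseteq> (\<Union>x\<in>F. rtrans (setprod B B) x)"
    "real (card F) * measure m B \<le> measure m (setprod B S)"
    by (rule packing[OF h B S])
  have Bc: "compact B" using B unfolding csu_nbhd_def by blast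
  have meas: "rtrans (setprod B B) x \<in> sets \<nu>" for x
    using compact_borel[OF compact_rtrans[OF compact_setprod[OF Bc Bc]]] sn by blast
  have "emeasure \<nu> S \<le> emeasure \<nu> (\<Union>x\<in>F. rtrans (setprod B B) x)"
    by (rule emeasure_mono[OF F(4)]) (use F(1) meas in auto)
  also have "\<dots> \<le> (\<Sum>x\<in>F. emeasure \<nu> (rtrans (setprod B B) x))"
    by (rule emeasure_subadditive_finite) (use F(1) meas in auto)
  also have "\<dots> \<le> (\<Sum>x\<in>F. ennreal C)"
    by (rule sum_mono) (rule bd)
  also have "\<dots> = ennreal (real (card F) * C)"
    using less_imp_le[OF C] by (simp add: ennreal_mult'' ennreal_of_nat_eq_real_of_nat)
  also have "\<dots> \<le> ennreal (C / measure m B * measure m (setprod B S))"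
  proof (rule ennreal_leI)
    have mB: "measure m B > 0" using haar_pos_real[OF h B] .
    have "real (card F) * C = C / measure m B * (real (card F) * measure m B)"
      using mB by (simp add: field_simps)
    also have "\<dots> \<le> C / measure m B * measure m (setprod B S)"
      by (rule mult_left_mono[OF F(5)]) (use mB C in simp)
    finally show "real (card F) * C \<le> C / measure m B * measure m (setprod B S)" .
  qed
  finally show ?thesis .
qed

lemma lower_est:
  fixes m \<nu> :: "'g::{topological_group_add,t2_space} measure"
  assumes h: "unimodular_haar m" and B: "csu_nbhd B" and sn: "sets \<nu> = sets borel"
    and C: "0 < C" and bd: "\<And>x. ennreal C \<le> emeasure \<nu> (rtrans B x)"
    and S: "compact S"
  shows "ennreal (C / measure m (setprod B B) * measure m S) \<le> emeasure \<nu> (setprod B S)"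
proof -
  obtain F where F: "finite F" "F \<subseteq> S" "disjoint_family_on (rtrans B) F"
    "S \<subseteq> (\<Union>x\<in>F. rtrans (setprod B B) x)"
    "real (card F) * measure m B \<le> measure m (setprod B S)"
    by (rule packing[OF h B S])
  have Bc: "compact B" using B unfolding csu_nbhd_def by blast
  have BBc: "compact (setprod B B)" using compact_setprod[OF Bc Bc] .
  have sm: "sets m = sets borel" using haar_sets[OF h] .
  have measm: "rtrans (setprod B B) x \<in> sets m" for x
    using compact_borel[OF compact_rtrans[OF BBc]] sm by blast
  have meas: "rtrans B x \<in> sets \<nu>" for x
    using compact_borel[OF compact_rtrans[OF Bc]] sn by blast
  have mBB: "measure m (setprod B B) > 0"
    using haar_pos_real[OF h B] haar_mono_real[OF h Bc BBc setprod_sub1[OF csu_zero[OF B]]]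
    by linarith
  have "emeasure m S \<le> emeasure m (\<Union>x\<in>F. rtrans (setprod B B) x)"
    by (rule emeasure_mono[OF F(4)]) (use F(1) measm in auto)
  also have "\<dots> \<le> (\<Sum>x\<in>F. emeasure m (rtrans (setprod B B) x))"
    by (rule emeasure_subadditive_finite) (use F(1) measm in auto)
  also have "\<dots> = (\<Sum>x\<in>F. emeasure m (setprod B B))"
    using haar_rinv[OF h compact_borel[OF BBc]] by simp
  also have "\<dots> = of_nat (card F) * ennreal (measure m (setprod B B))"
    unfolding haar_fin_real[OF h BBc] by simp
  also have "\<dots> = ennreal (real (card F) * measure m (setprod B B))"
    using less_imp_le[OF C] by (simp add: ennreal_mult'' ennreal_of_nat_eq_real_of_nat)
  finally have "ennreal (measure m S) \<le> ennreal (real (card F) * measure m (setprod B B))"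
    unfolding haar_fin_real[OF h S] .
  hence mS: "measure m S \<le> real (card F) * measure m (setprod B B)"
    using mBB by (simp add: ennreal_le_iff)
  have "ennreal (C / measure m (setprod B B) * measure m S) \<le> ennreal (real (card F) * C)"
  proof (rule ennreal_leI)
    have "C / measure m (setprod B B) * measure m S
          \<le> C / measure m (setprod B B) * (real (card F) * measure m (setprod B B))"
      by (rule mult_left_mono[OF mS]) (use mBB C in simp)
    also have "\<dots> = real (card F) * C" using mBB by (simp add: field_simps)
    finally show "C / measure m (setprod B B) * measure m S \<le> real (card F) * C" .
  qed
  also have "\<dots> = (\<Sum>x\<in>F. ennreal C)"
    using less_imp_le[OF C] by (simp add: ennreal_mult'' ennreal_of_nat_eq_real_of_nat)
  also have "\<dots> \<le> (\<Sum>x\<in>F. emeasure \<nu> (rtrans B x))"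
    by (rule sum_mono) (rule bd)
  also have "\<dots> = emeasure \<nu> (\<Union>x\<in>F. rtrans B x)"
    by (rule sum_emeasure) (use F(1,3) meas in auto)
  also have "\<dots> \<le> emeasure \<nu> (setprod B S)"
  proof (rule emeasure_mono)
    show "(\<Union>x\<in>F. rtrans B x) \<subseteq> setprod B S"
      using F(2) unfolding rtrans_def setprod_def by blast
    show "setprod B S \<in> sets \<nu>" using compact_borel[OF compact_setprod[OF Bc S]] sn by blast
  qed
  finally show ?thesis .
qed


lemma INF_mult_const_ennreal:
  fixes c :: ennreal
  assumes "c \<noteq> 0" "c \<noteq> \<infinity>"
  shows "c * (INF i\<in>I. f i) = (INF i\<in>I. c * f i)"
proof (rule antisym)
  show "c * (INF i\<in>I. f i) \<le> (INF i\<in>I. c * f i)"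
    by (rule INF_greatest) (intro mult_left_mono INF_lower, auto)
  have "(INF i\<in>I. c * f i) / c \<le> (INF i\<in>I. f i)"
  proof (rule INF_greatest)
    fix i assume "i \<in> I"
    hence "(INF i\<in>I. c * f i) / c \<le> (c * f i) / c"
      by (intro divide_right_mono_ennreal INF_lower)
    also have "\<dots> = f i" using assms mult_divide_eq_ennreal[of c "f i"]
      by (simp add: mult.commute infinity_ennreal_def)
    finally show "(INF i\<in>I. c * f i) / c \<le> f i" .
  qed
  hence "c * ((INF i\<in>I. c * f i) / c) \<le> c * (INF i\<in>I. f i)"
    by (rule mult_left_mono) simp
  moreover have "c * ((INF i\<in>I. c * f i) / c) = (INF i\<in>I. c * f i)"
    using assms mult_divide_eq_ennreal[of c "INF i\<in>I. c * f i"]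
    by (simp add: ennreal_times_divide mult.commute infinity_ennreal_def)
  ultimately show "(INF i\<in>I. c * f i) \<le> c * (INF i\<in>I. f i)" by simp
qed

lemma cpt_pos_measure:
  fixes m :: "'g::{topological_group_add,t2_space} measure"
  assumes h: "unimodular_haar m" and A: "A \<in> cpt_pos_sets m"
  shows "compact A" "measure m A > 0"
proof -
  show c: "compact A" using A unfolding cpt_pos_sets_def by blast
  have "emeasure m A > 0" using A unfolding cpt_pos_sets_def by blast
  thus "measure m A > 0" unfolding haar_fin_real[OF h c] by simp
qed

lemma setprod_meas_ge:
  fixes m :: "'g::{topological_group_add,t2_space} measure"
  assumes h: "unimodular_haar m" and K: "K \<in> cpt_sets" and A: "compact A"
  shows "measure m A \<le> measure m (setprod K A)"
proof -
  obtain k where k: "k \<in> K" using K unfolding cpt_sets_def by blast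
  have Kc: "compact K" using K unfolding cpt_sets_def by blast
  have lc: "compact (ltrans k A)" unfolding ltrans_def
    by (intro compact_continuous_image A continuous_intros)
  have "emeasure m (ltrans k A) = emeasure m A"
    using haar_linv[OF h compact_borel[OF A]] .
  hence eq: "measure m (ltrans k A) = measure m A" by (simp add: measure_def)
  have "ltrans k A \<subseteq> setprod K A" unfolding ltrans_def setprod_def using k by blast
  from haar_mono_real[OF h lc compact_setprod[OF Kc A] this] eq show ?thesis by simp
qed

lemma cpt_pos_setprod:
  fixes m :: "'g::{topological_group_add,t2_space} measure"
  assumes h: "unimodular_haar m" and K: "K \<in> cpt_sets" and A: "A \<in> cpt_pos_sets m"
  shows "setprod K A \<in> cpt_pos_sets m"
proof -
  have Kc: "compact K" "K \<noteq> {}" using K unfolding cpt_sets_def by auto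
  have Ac: "compact A" "A \<noteq> {}" using A unfolding cpt_pos_sets_def by auto
  have c: "compact (setprod K A)" using compact_setprod[OF Kc(1) Ac(1)] .
  have "measure m (setprod K A) > 0"
    using setprod_meas_ge[OF h K Ac(1)] cpt_pos_measure(2)[OF h A] by linarith
  hence "emeasure m (setprod K A) > 0" unfolding haar_fin_real[OF h c] by simp
  thus ?thesis using c setprod_ne[OF Kc(2) Ac(2)] unfolding cpt_pos_sets_def by blast
qed

lemma cpt_sets_setprod: "K \<in> cpt_sets \<Longrightarrow> L \<in> cpt_sets \<Longrightarrow> setprod K (L::'g::topological_group_add set) \<in> cpt_sets"
  unfolding cpt_sets_def by (auto simp: compact_setprod setprod_ne)

lemma ratio_eq:
  fixes m :: "'g::{topological_group_add,t2_space} measure"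
  assumes h: "unimodular_haar m" and A: "A \<in> cpt_pos_sets m" and X: "compact X"
  shows "emeasure m X / emeasure m A = ennreal (measure m X / measure m A)"
  unfolding haar_fin_real[OF h X] haar_fin_real[OF h cpt_pos_measure(1)[OF h A]]
  using cpt_pos_measure(2)[OF h A] by (simp add: divide_ennreal)

lemma I_ge1:
  fixes m :: "'g::{topological_group_add,t2_space} measure"
  assumes h: "unimodular_haar m"
  shows "1 \<le> I_G m"
proof -
  have z: "{0} \<in> (cpt_sets :: 'g set set)" unfolding cpt_sets_def by simp
  have s0: "setprod {0} A = A" for A :: "'g set" unfolding setprod_def by auto
  have "1 \<le> (INF A \<in> cpt_pos_sets m. emeasure m (setprod {0} A) / emeasure m A)"
  proof (rule INF_greatest)
    fix A assume A: "A \<in> cpt_pos_sets m"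
    have "emeasure m A \<noteq> 0" "emeasure m A < \<infinity>"
      using A haar_fin[OF h] unfolding cpt_pos_sets_def by auto
    thus "1 \<le> emeasure m (setprod {0} A) / emeasure m A" unfolding s0 by simp
  qed
  also have "\<dots> \<le> I_G m" unfolding I_G_def by (rule SUP_upper[OF z])
  finally show ?thesis .
qed


theorem lemma3p7:
  fixes m \<nu> :: "'g::{topological_group_add, t2_space} measure"
    and Bl Bu :: "'g set" and Cl Cu :: real
  assumes "locally_compact_space (euclidean :: 'g topology)"
    and "unimodular_haar m"
    and "delone_measure \<nu>"
    and "csu_nbhd Bl" and "csu_nbhd Bu"
    and "0 < Cl" and "0 < Cu"
    and "\<And>x. ennreal Cl \<le> emeasure \<nu> (rtrans Bl x)"
    and "\<And>x. emeasure \<nu> (rtrans (setprod Bu Bu) x) \<le> ennreal Cu"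
  shows "ennreal Cl / emeasure m (setprod Bl Bl) * I_G m \<le> L_minus m \<nu> \<and>
           L_minus m \<nu> \<le> ennreal Cu / emeasure m Bu * I_G m \<and>
           ennreal Cl / emeasure m (setprod Bl Bl) * inverse (I_G m) \<le> L_plus m \<nu> \<and>
           L_plus m \<nu> \<le> ennreal Cu / emeasure m Bu * inverse (I_G m)"
proof -
  note h = assms(2)
  have sn: "sets \<nu> = sets borel" using assms(3) unfolding delone_measure_def borel_measure_on_def by blast
  have Blc: "compact Bl" using assms(4) unfolding csu_nbhd_def by blast
  have Buc: "compact Bu" using assms(5) unfolding csu_nbhd_def by blast
  have BBc: "compact (setprod Bl Bl)" using compact_setprod[OF Blc Blc] .
  have Blcs: "Bl \<in> cpt_sets" using Blc csu_zero[OF assms(4)] unfolding cpt_sets_def by blast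
  have Bucs: "Bu \<in> cpt_sets" using Buc csu_zero[OF assms(5)] unfolding cpt_sets_def by blast
  have Blp: "Bl \<in> cpt_pos_sets m" using Blc csu_zero[OF assms(4)] haar_pos[OF h assms(4)]
    unfolding cpt_pos_sets_def by blast
  have mBu: "measure m Bu > 0" using haar_pos_real[OF h assms(5)] .
  have mBB: "measure m (setprod Bl Bl) > 0"
    using haar_pos_real[OF h assms(4)] haar_mono_real[OF h Blc BBc setprod_sub1[OF csu_zero[OF assms(4)]]]
    by linarith
  define \<alpha> where "\<alpha> = Cl / measure m (setprod Bl Bl)"
  define \<beta> where "\<beta> = Cu / measure m Bu"
  have \<alpha>pos: "\<alpha> > 0" unfolding \<alpha>_def using mBB assms(6) by simp
  have \<beta>pos: "\<beta> > 0" unfolding \<beta>_def using mBu assms(7) by simp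
  have aeq: "ennreal Cl / emeasure m (setprod Bl Bl) = ennreal \<alpha>"
    unfolding haar_fin_real[OF h BBc] \<alpha>_def using mBB assms(6) by (simp add: divide_ennreal)
  have beq: "ennreal Cu / emeasure m Bu = ennreal \<beta>"
    unfolding haar_fin_real[OF h Buc] \<beta>_def using mBu assms(7) by (simp add: divide_ennreal)
  have KU: "emeasure \<nu> S \<le> ennreal (\<beta> * measure m (setprod Bu S))" if "compact S" for S
    using upper_est[OF h assms(5) sn assms(7) assms(9) that] unfolding \<beta>_def .
  have KL: "ennreal (\<alpha> * measure m S) \<le> emeasure \<nu> (setprod Bl S)" if "compact S" for S
    using lower_est[OF h assms(4) sn assms(6) assms(8) that] unfolding \<alpha>_def .
  have cK: "compact K" if "K \<in> cpt_sets" for K using that unfolding cpt_sets_def by blast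
  have cA: "compact A" if "A \<in> cpt_pos_sets m" for A using that unfolding cpt_pos_sets_def by blast

  have c1: "ennreal \<alpha> * I_G m \<le> L_minus m \<nu>"
  proof -
    have "ennreal \<alpha> * I_G m = (SUP K\<in>cpt_sets. ennreal \<alpha> *
        (INF A\<in>cpt_pos_sets m. emeasure m (setprod K A) / emeasure m A))"
      unfolding I_G_def by (rule SUP_mult_left_ennreal)
    also have "\<dots> \<le> L_minus m \<nu>"
    proof (rule SUP_least)
      fix K :: "'g set" assume K: "K \<in> cpt_sets"
      have "ennreal \<alpha> * (INF A\<in>cpt_pos_sets m. emeasure m (setprod K A) / emeasure m A)
          = (INF A\<in>cpt_pos_sets m. ennreal \<alpha> * (emeasure m (setprod K A) / emeasure m A))"
        using \<alpha>pos by (intro INF_mult_const_ennreal) auto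
      also have "\<dots> \<le> (INF A\<in>cpt_pos_sets m. emeasure \<nu> (setprod (setprod Bl K) A) / emeasure m A)"
      proof (rule INF_mono)
        fix A assume A: "A \<in> cpt_pos_sets m"
        have KA: "compact (setprod K A)" using compact_setprod[OF cK[OF K] cA[OF A]] .
        have mA: "measure m A > 0" using cpt_pos_measure(2)[OF h A] .
        have "ennreal \<alpha> * (emeasure m (setprod K A) / emeasure m A)
            = ennreal (\<alpha> * measure m (setprod K A)) / ennreal (measure m A)"
          unfolding ratio_eq[OF h A KA] using mA \<alpha>pos
          by (simp add: divide_ennreal ennreal_mult''[symmetric])
        also have "\<dots> \<le> emeasure \<nu> (setprod Bl (setprod K A)) / ennreal (measure m A)"
          by (rule divide_right_mono_ennreal) (rule KL[OF KA])
        also have "\<dots> = emeasure \<nu> (setprod (setprod Bl K) A) / emeasure m A"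
          unfolding setprod_assoc haar_fin_real[OF h cA[OF A]] ..
        finally show "\<exists>A'\<in>cpt_pos_sets m. ennreal \<alpha> * (emeasure m (setprod K A') / emeasure m A')
            \<le> emeasure \<nu> (setprod (setprod Bl K) A) / emeasure m A" using A by blast
      qed
      also have "\<dots> \<le> L_minus m \<nu>"
        unfolding L_minus_def by (rule SUP_upper[where f="\<lambda>K. INF A\<in>cpt_pos_sets m. emeasure \<nu> (setprod K A) / emeasure m A"]) (rule cpt_sets_setprod[OF Blcs K])
      finally show "ennreal \<alpha> * (INF A\<in>cpt_pos_sets m. emeasure m (setprod K A) / emeasure m A) \<le> L_minus m \<nu>" .
    qed
    finally show ?thesis .
  qed

  have c2: "L_minus m \<nu> \<le> ennreal \<beta> * I_G m"
    unfolding L_minus_def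
  proof (rule SUP_least)
    fix K :: "'g set" assume K: "K \<in> cpt_sets"
    have "(INF A\<in>cpt_pos_sets m. emeasure \<nu> (setprod K A) / emeasure m A)
        \<le> (INF A\<in>cpt_pos_sets m. ennreal \<beta> * (emeasure m (setprod (setprod Bu K) A) / emeasure m A))"
    proof (rule INF_mono)
      fix A assume A: "A \<in> cpt_pos_sets m"
      have KA: "compact (setprod K A)" using compact_setprod[OF cK[OF K] cA[OF A]] .
      have BKA: "compact (setprod (setprod Bu K) A)"
        using compact_setprod[OF compact_setprod[OF Buc cK[OF K]] cA[OF A]] .
      have mA: "measure m A > 0" using cpt_pos_measure(2)[OF h A] .
      have "emeasure \<nu> (setprod K A) / emeasure m A
          \<le> ennreal (\<beta> * measure m (setprod (setprod Bu K) A)) / ennreal (measure m A)"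
        unfolding haar_fin_real[OF h cA[OF A]] setprod_assoc
        by (rule divide_right_mono_ennreal) (rule KU[OF KA])
      also have "\<dots> = ennreal \<beta> * (emeasure m (setprod (setprod Bu K) A) / emeasure m A)"
        unfolding ratio_eq[OF h A BKA] using mA \<beta>pos
        by (simp add: divide_ennreal ennreal_mult''[symmetric])
      finally show "\<exists>A'\<in>cpt_pos_sets m. emeasure \<nu> (setprod K A') / emeasure m A'
          \<le> ennreal \<beta> * (emeasure m (setprod (setprod Bu K) A) / emeasure m A)" using A by blast
    qed
    also have "\<dots> = ennreal \<beta> * (INF A\<in>cpt_pos_sets m. emeasure m (setprod (setprod Bu K) A) / emeasure m A)"
      using \<beta>pos by (intro INF_mult_const_ennreal[symmetric]) auto
    also have "\<dots> \<le> ennreal \<beta> * I_G m"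
      unfolding I_G_def
      by (intro mult_left_mono SUP_upper[where f="\<lambda>K. INF A\<in>cpt_pos_sets m. emeasure m (setprod K A) / emeasure m A"] cpt_sets_setprod[OF Bucs K]) simp
    finally show "(INF A\<in>cpt_pos_sets m. emeasure \<nu> (setprod K A) / emeasure m A) \<le> ennreal \<beta> * I_G m" .
  qed

  have Ige1: "1 \<le> I_G m" using I_ge1[OF h] .

  have c3: "ennreal \<alpha> * inverse (I_G m) \<le> L_plus m \<nu>"
  proof (cases "I_G m" rule: ennreal_cases)
    case top
    thus ?thesis by simp
  next
    case (real i)
    note Ieq = real(2)
    have "1 \<le> ennreal i" using Ige1 real(2) by simp
    hence i1: "1 \<le> i" using ennreal_le_iff[OF real(1), of 1] by simp
    show ?thesis unfolding L_plus_def
    proof (rule INF_greatest)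
      fix K :: "'g set" assume K: "K \<in> cpt_sets"
      define K' where "K' = setprod K Bl"
      have K': "K' \<in> cpt_sets" unfolding K'_def using cpt_sets_setprod[OF K Blcs] .
      define S where "S = (SUP A\<in>cpt_pos_sets m. emeasure \<nu> A / emeasure m (setprod K A))"
      have ptw: "ennreal (\<alpha> * measure m A' / measure m (setprod K' A')) \<le> S"
        if A': "A' \<in> cpt_pos_sets m" for A'
      proof -
        have A: "setprod Bl A' \<in> cpt_pos_sets m" using cpt_pos_setprod[OF h Blcs A'] .
        have KA: "compact (setprod K' A')" using compact_setprod[OF cK[OF K'] cA[OF A']] .
        have mKA: "measure m (setprod K' A') > 0"
          using cpt_pos_measure(2)[OF h cpt_pos_setprod[OF h K' A']] .
        have "ennreal (\<alpha> * measure m A' / measure m (setprod K' A'))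
            = ennreal (\<alpha> * measure m A') / ennreal (measure m (setprod K' A'))"
          using mKA \<alpha>pos by (simp add: divide_ennreal)
        also have "\<dots> \<le> emeasure \<nu> (setprod Bl A') / ennreal (measure m (setprod K' A'))"
          by (rule divide_right_mono_ennreal) (rule KL[OF cA[OF A']])
        also have "\<dots> = emeasure \<nu> (setprod Bl A') / emeasure m (setprod K (setprod Bl A'))"
          unfolding K'_def setprod_assoc
          by (subst haar_fin_real[OF h KA[unfolded K'_def setprod_assoc]]) (rule refl)
        also have "\<dots> \<le> S" unfolding S_def
          by (rule SUP_upper[where f="\<lambda>A. emeasure \<nu> A / emeasure m (setprod K A)"]) (rule A)
        finally show ?thesis .
      qed
      show "ennreal \<alpha> * inverse (I_G m) \<le> S"
      proof (cases S rule: ennreal_cases)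
        case top thus ?thesis by simp
      next
        case (real s)
        have s0: "s > 0"
        proof -
          have "ennreal (\<alpha> * measure m Bl / measure m (setprod K' Bl)) \<le> ennreal s"
            using ptw[OF Blp] unfolding real(2) .
          moreover have "\<alpha> * measure m Bl / measure m (setprod K' Bl) > 0"
            using \<alpha>pos cpt_pos_measure(2)[OF h Blp] cpt_pos_measure(2)[OF h cpt_pos_setprod[OF h K' Blp]]
            by simp
          ultimately show ?thesis using ennreal_le_iff[OF real(1)] by force
        qed
        define J where "J = (INF A\<in>cpt_pos_sets m. emeasure m (setprod K' A) / emeasure m A)"
        have JI0: "J \<le> I_G m" unfolding J_def I_G_def
          by (rule SUP_upper[where f="\<lambda>K. INF A\<in>cpt_pos_sets m. emeasure m (setprod K A) / emeasure m A"]) (rule K')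
        have JI: "J \<le> ennreal i" using JI0 Ieq by simp
        have Jlow: "ennreal (\<alpha> / s) \<le> J" unfolding J_def
        proof (rule INF_greatest)
          fix A assume A: "A \<in> cpt_pos_sets m"
          have KA: "compact (setprod K' A)" using compact_setprod[OF cK[OF K'] cA[OF A]] .
          have mKA: "measure m (setprod K' A) > 0"
            using cpt_pos_measure(2)[OF h cpt_pos_setprod[OF h K' A]] .
          have mA: "measure m A > 0" using cpt_pos_measure(2)[OF h A] .
          have "\<alpha> * measure m A / measure m (setprod K' A) \<le> s"
            using ptw[OF A] ennreal_le_iff[OF real(1)] unfolding real(2) by blast
          hence "\<alpha> / s \<le> measure m (setprod K' A) / measure m A"
            using mKA mA s0 by (simp add: field_simps)
          thus "ennreal (\<alpha> / s) \<le> emeasure m (setprod K' A) / emeasure m A"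
            unfolding ratio_eq[OF h A KA] by (rule ennreal_leI)
        qed
        have "\<alpha> / s \<le> i" using order.trans[OF Jlow JI] ennreal_le_iff[of i "\<alpha> / s"] i1 by simp
        hence "\<alpha> / i \<le> s" using s0 i1 by (simp add: field_simps)
        hence "ennreal (\<alpha> / i) \<le> ennreal s" by (rule ennreal_leI)
        have "inverse (I_G m) = ennreal (inverse i)" unfolding Ieq using i1 by (simp add: inverse_ennreal)
        moreover have "ennreal \<alpha> * ennreal (inverse i) = ennreal (\<alpha> / i)"
          using i1 by (simp add: ennreal_mult''[symmetric] divide_inverse)
        ultimately have "ennreal \<alpha> * inverse (I_G m) = ennreal (\<alpha> / i)" by simp
        thus ?thesis using \<open>ennreal (\<alpha> / i) \<le> ennreal s\<close> unfolding real(2) by simp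
      qed
    qed
  qed

  have percase: "L_plus m \<nu> * ennreal c \<le> ennreal \<beta>" if c0: "0 < c" and cI: "ennreal c < I_G m" for c
  proof -
    obtain K0 where K0: "K0 \<in> cpt_sets"
      and lt: "ennreal c < (INF A\<in>cpt_pos_sets m. emeasure m (setprod K0 A) / emeasure m A)"
      using cI unfolding I_G_def less_SUP_iff by blast
    define K where "K = setprod K0 Bu"
    have K: "K \<in> cpt_sets" unfolding K_def using cpt_sets_setprod[OF K0 Bucs] .
    have "L_plus m \<nu> \<le> (SUP A\<in>cpt_pos_sets m. emeasure \<nu> A / emeasure m (setprod K A))"
      unfolding L_plus_def
      by (rule INF_lower[where f="\<lambda>K. SUP A\<in>cpt_pos_sets m. emeasure \<nu> A / emeasure m (setprod K A)"]) (rule K)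
    hence "L_plus m \<nu> * ennreal c \<le> (SUP A\<in>cpt_pos_sets m. emeasure \<nu> A / emeasure m (setprod K A)) * ennreal c"
      by (rule mult_right_mono) simp
    also have "\<dots> = (SUP A\<in>cpt_pos_sets m. emeasure \<nu> A / emeasure m (setprod K A) * ennreal c)"
      by (rule SUP_mult_right_ennreal)
    also have "\<dots> \<le> ennreal \<beta>"
    proof (rule SUP_least)
      fix A assume A: "A \<in> cpt_pos_sets m"
      have BA: "setprod Bu A \<in> cpt_pos_sets m" using cpt_pos_setprod[OF h Bucs A] .
      have BAc: "compact (setprod K0 (setprod Bu A))" using compact_setprod[OF cK[OF K0] cA[OF BA]] .
      have mBA: "measure m (setprod Bu A) > 0" using cpt_pos_measure(2)[OF h BA] .
      have "ennreal c < emeasure m (setprod K0 (setprod Bu A)) / emeasure m (setprod Bu A)"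
        using less_le_trans[OF lt INF_lower[OF BA, of "\<lambda>A. emeasure m (setprod K0 A) / emeasure m A"]] .
      hence "c < measure m (setprod K0 (setprod Bu A)) / measure m (setprod Bu A)"
        unfolding ratio_eq[OF h BA BAc] using ennreal_less_iff[OF less_imp_le[OF c0]] by blast
      hence cm: "c * measure m (setprod Bu A) \<le> measure m (setprod K A)"
        using mBA unfolding K_def setprod_assoc by (simp add: field_simps)
      have mKA: "measure m (setprod K A) > 0"
        using cm mult_pos_pos[OF c0 mBA] by linarith
      have KAc: "compact (setprod K A)" using compact_setprod[OF cK[OF K] cA[OF A]] .
      have "emeasure \<nu> A / emeasure m (setprod K A) * ennreal c
          \<le> ennreal (\<beta> * measure m (setprod Bu A)) / ennreal (measure m (setprod K A)) * ennreal c"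
        unfolding haar_fin_real[OF h KAc]
        by (intro mult_right_mono divide_right_mono_ennreal KU[OF cA[OF A]]) simp
      also have "\<dots> = ennreal (\<beta> * measure m (setprod Bu A) / measure m (setprod K A) * c)"
        using mKA c0 \<beta>pos by (simp add: divide_ennreal ennreal_mult''[symmetric])
      also have "\<dots> \<le> ennreal \<beta>"
      proof (rule ennreal_leI)
        have "\<beta> * measure m (setprod Bu A) / measure m (setprod K A) * c
            = \<beta> * (c * measure m (setprod Bu A)) / measure m (setprod K A)" by (simp add: field_simps)
        also have "\<dots> \<le> \<beta> * measure m (setprod K A) / measure m (setprod K A)"
          using cm \<beta>pos mKA by (intro divide_right_mono mult_left_mono) auto
        also have "\<dots> = \<beta>" using mKA by simp
        finally show "\<beta> * measure m (setprod Bu A) / measure m (setprod K A) * c \<le> \<beta>" .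
      qed
      finally show "emeasure \<nu> A / emeasure m (setprod K A) * ennreal c \<le> ennreal \<beta>" .
    qed
    finally show ?thesis .
  qed

  have c4: "L_plus m \<nu> \<le> ennreal \<beta> * inverse (I_G m)"
  proof -
    have "ennreal (1/2) < ennreal 1" using ennreal_less_iff[of "1/2" 1] by simp
    hence "ennreal (1/2) < I_G m" using Ige1 by simp
    hence half: "L_plus m \<nu> * ennreal (1/2) \<le> ennreal \<beta>" using percase[of "1/2"] by simp
    have fin: "L_plus m \<nu> \<noteq> top"
    proof
      assume "L_plus m \<nu> = top"
      hence "L_plus m \<nu> * ennreal (1/2) = top" by simp
      thus False by (metis half ennreal_neq_top top_unique)
    qed
    then obtain l where l: "L_plus m \<nu> = ennreal l" "0 \<le> l" by (cases "L_plus m \<nu>") auto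
    show ?thesis
    proof (cases "I_G m" rule: ennreal_cases)
      case top
      have "l = 0"
      proof (rule ccontr)
        assume "l \<noteq> 0" hence lp: "l > 0" using l(2) by simp
        define c where "c = 2 * \<beta> / l"
        have c0: "c > 0" unfolding c_def using lp \<beta>pos by simp
        have "L_plus m \<nu> * ennreal c \<le> ennreal \<beta>" using percase[OF c0] top by simp
        hence "ennreal (l * c) \<le> ennreal \<beta>" unfolding l(1) using l(2) c0
          by (simp add: ennreal_mult''[symmetric])
        hence "l * c \<le> \<beta>" using ennreal_le_iff[OF less_imp_le[OF \<beta>pos], of "l * c"] by simp
        moreover have "l * c = 2 * \<beta>" unfolding c_def using lp by simp
        ultimately show False using \<beta>pos by simp
      qed
      thus ?thesis using l top by simp
    next
      case (real i)
      have "1 \<le> ennreal i" using Ige1 real(2) by simp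
      hence i1: "1 \<le> i" using ennreal_le_iff[OF real(1), of 1] by simp
      have "l * i \<le> \<beta>"
      proof (rule ccontr)
        assume "\<not> l * i \<le> \<beta>"
        hence gt: "\<beta> < l * i" by simp
        have "l \<noteq> 0" using gt \<beta>pos by auto
        hence lp: "l > 0" using l(2) by simp
        define c where "c = (\<beta> / l + i) / 2"
        have bl: "\<beta> / l < i" using gt lp by (simp add: field_simps)
        have c0: "c > 0" unfolding c_def using divide_pos_pos[OF \<beta>pos lp] i1 by simp
        have ci: "c < i" unfolding c_def using bl by simp
        have "ennreal c < I_G m" unfolding real(2) using ci ennreal_less_iff[OF less_imp_le[OF c0], of i] by simp
        hence "L_plus m \<nu> * ennreal c \<le> ennreal \<beta>" using percase[OF c0] by simp
        hence "ennreal (l * c) \<le> ennreal \<beta>" unfolding l(1) using l(2) c0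
          by (simp add: ennreal_mult''[symmetric])
        hence "l * c \<le> \<beta>" using ennreal_le_iff[OF less_imp_le[OF \<beta>pos], of "l * c"] by simp
        moreover have "\<beta> < l * c" unfolding c_def using gt lp by (simp add: field_simps)
        ultimately show False by simp
      qed
      hence "l \<le> \<beta> / i" using i1 by (simp add: field_simps)
      hence le: "ennreal l \<le> ennreal (\<beta> / i)" by (rule ennreal_leI)
      have "inverse (I_G m) = ennreal (inverse i)" unfolding real(2) using i1 by (simp add: inverse_ennreal)
      moreover have "ennreal \<beta> * ennreal (inverse i) = ennreal (\<beta> / i)"
        using i1 by (simp add: ennreal_mult''[symmetric] divide_inverse)
      ultimately have "ennreal \<beta> * inverse (I_G m) = ennreal (\<beta> / i)" by simp
      thus ?thesis using le l(1) by simp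
    qed
  qed

  show ?thesis unfolding aeq beq using c1 c2 c3 c4 by blast
qed

end
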